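(* A convex $a^2bc$-quadrilateral on the sphere (all angles $<\pi$) satisfies $\alpha+2\beta>\pi$ and $\alpha+2\gamma>\pi$.
   Context: An $a^2bc$-quadrilateral has edges $a,a,b,c$ in cyclic order with $a,b,c$ pairwise distinct; $\alpha$ = angle between the two $a$-edges; $\beta$ = angle between an $a$-edge and the $b$-edge; $\delta$ = angle between the $b$-edge and the $c$-edge; $\gamma$ = angle between the $c$-edge and the other $a$-edge. *)

theory Defs
  imports "HOL-Analysis.Analysis"
begin

definition on_sphere :: "real^3 \<Rightarrow> bool" where
  "on_sphere x \<longleftrightarrow> norm x = 1"

definition sph_dist :: "real^3 \<Rightarrow> real^3 \<Rightarrow> real" where
  "sph_dist u v = arccos (u \<bullet> v)"

definition sph_angle :: "real^3 \<Rightarrow> real^3 \<Rightarrow> real^3 \<Rightarrow> real" where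
  "sph_angle Q P R =
     (let tQ = Q - (P \<bullet> Q) *\<^sub>R P; tR = R - (P \<bullet> R) *\<^sub>R P
      in arccos ((tQ \<bullet> tR) / (norm tQ * norm tR)))"

definition orient :: "real^3 \<Rightarrow> real^3 \<Rightarrow> real^3 \<Rightarrow> real" where
  "orient u v w = u \<bullet> cross3 v w"

text \<open>A convex spherical quadrilateral V0 V1 V2 V3 (vertices in cyclic order,
  either orientation s = 1 or s = -1, edges great arcs V0V1, V1V2, V2V3, V3V0):
  for every edge, the two remaining vertices lie strictly on the interior side of the
  great circle through that edge.  This is exactly the condition that the quadrilateral
  is a simple spherical polygon all of whose interior angles are < pi; under it the
  interior angle at a vertex is the spherical angle sph_angle.\<close>
definition convex_sph_quad :: "real^3 \<Rightarrow> real^3 \<Rightarrow> real^3 \<Rightarrow> real^3 \<Rightarrow> bool" where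
  "convex_sph_quad V0 V1 V2 V3 \<longleftrightarrow>
     on_sphere V0 \<and> on_sphere V1 \<and> on_sphere V2 \<and> on_sphere V3 \<and>
     (\<exists>s::real. (s = 1 \<or> s = -1) \<and>
       s * orient V0 V1 V2 > 0 \<and> s * orient V0 V1 V3 > 0 \<and>
       s * orient V1 V2 V3 > 0 \<and> s * orient V1 V2 V0 > 0 \<and>
       s * orient V2 V3 V0 > 0 \<and> s * orient V2 V3 V1 > 0 \<and>
       s * orient V3 V0 V1 > 0 \<and> s * orient V3 V0 V2 > 0)"

end

theory Submission
  imports Defs
begin


definition cosang :: "real^3 \<Rightarrow> real^3 \<Rightarrow> real^3 \<Rightarrow> real" where
  "cosang Q P R = ((Q - (P \<bullet> Q) *\<^sub>R P) \<bullet> (R - (P \<bullet> R) *\<^sub>R P)) /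
     (norm (Q - (P \<bullet> Q) *\<^sub>R P) * norm (R - (P \<bullet> R) *\<^sub>R P))"

lemma sph_angle_cos: "sph_angle Q P R = arccos (cosang Q P R)"
  by (simp add: sph_angle_def cosang_def Let_def)

lemma cosang_bound: "\<bar>cosang Q P R\<bar> \<le> 1"
proof -
  let ?a = "Q - (P \<bullet> Q) *\<^sub>R P" and ?b = "R - (P \<bullet> R) *\<^sub>R P"
  have cs: "\<bar>?a \<bullet> ?b\<bar> \<le> norm ?a * norm ?b" by (rule Cauchy_Schwarz_ineq2)
  show ?thesis
  proof (cases "norm ?a * norm ?b = 0")
    case True show ?thesis unfolding cosang_def True by simp
  next
    case False
    then have "norm ?a * norm ?b > 0" by (simp add: less_le)
    then show ?thesis using cs by (simp add: cosang_def abs_div divide_le_eq_1)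
  qed
qed

lemma tan_inner:
  assumes "norm P = 1"
  shows "(X - (P \<bullet> X) *\<^sub>R P) \<bullet> (Y - (P \<bullet> Y) *\<^sub>R P) = X \<bullet> Y - (P \<bullet> X) * (P \<bullet> Y)"
proof -
  have "P \<bullet> P = 1" using assms by (simp add: norm_eq_1)
  then show ?thesis by (simp add: inner_diff_left inner_diff_right inner_commute algebra_simps)
qed

lemma tan_norm2:
  assumes "norm P = 1" "norm X = 1"
  shows "(norm (X - (P \<bullet> X) *\<^sub>R P))^2 = 1 - (P \<bullet> X)^2"
  using tan_inner[OF assms(1), of X X] assms(2)
  by (simp add: power2_norm_eq_inner[symmetric] power2_eq_square)

lemma frac_lt:
  fixes a b c d :: real
  assumes "0 < b" "0 < d" "a * d < c * b"
  shows "a / b < c / d"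
proof -
  have "a / b = (a * d) / (b * d)" "c / d = (c * b) / (b * d)" using assms by auto
  moreover have "(a * d) / (b * d) < (c * b) / (b * d)"
    using assms by (intro divide_strict_right_mono) auto
  ultimately show ?thesis by simp
qed

lemma arccos_sum:
  assumes "\<bar>xa\<bar> \<le> 1" "\<bar>xt\<bar> \<le> 1" "xt^2 < (1 - xa)/2"
  shows "arccos xa + 2 * arccos xt > pi"
proof (rule ccontr)
  assume "\<not> ?thesis"
  then have h: "arccos xa + 2 * arccos xt \<le> pi" by simp
  have a0: "0 \<le> arccos xa" "arccos xa \<le> pi" using assms by (auto intro: arccos_lbound arccos_ubound)
  have t0: "0 \<le> arccos xt" using assms by (auto intro: arccos_lbound)
  have "cos (pi - arccos xa) \<le> cos (2 * arccos xt)"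
    by (rule cos_monotone_0_pi_le) (use h a0 t0 in auto)
  then have "- xa \<le> 2 * xt^2 - 1" using assms by (simp add: cos_double_cos cos_arccos_abs)
  then show False using assms(3) by simp
qed

lemma orient_cyc: "orient P Q R = orient Q R P" "orient P Q R = - orient Q P R"
  "orient P P R = 0" "orient P Q P = 0" "orient P Q Q = 0"
  "orient P Q R = R \<bullet> (cross3 P Q)"
  unfolding orient_def by (simp_all add: cross3_simps)

lemma tri:
  assumes P: "norm P = 1" and Q: "norm Q = 1" and R: "norm R = 1"
    and pq: "P \<bullet> Q = P \<bullet> R" and o: "orient P Q R \<noteq> 0"
  shows "sph_angle Q P R + 2 * sph_angle P Q R > pi"
proof -
  define p where "p = P \<bullet> Q"
  define q where "q = Q \<bullet> R"
  have PR: "P \<bullet> R = p" using pq p_def by simp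
  have "R \<bullet> (cross3 P Q) \<noteq> 0" using o orient_cyc(6) by metis
  then have "cross3 P Q \<noteq> 0" by auto
  then have "(norm (cross3 P Q))^2 > 0" by simp
  moreover have "(norm (cross3 P Q))^2 + p^2 = 1" using norm_cross_dot[of P Q] P Q p_def by simp
  ultimately have p1: "p^2 < 1" by linarith
  have "P \<bullet> (cross3 Q R) \<noteq> 0" using o by (simp add: orient_def)
  then have "cross3 Q R \<noteq> 0" by auto
  then have "(norm (cross3 Q R))^2 > 0" by simp
  moreover have "(norm (cross3 Q R))^2 + q^2 = 1" using norm_cross_dot[of Q R] R Q q_def by simp
  ultimately have q1: "q^2 < 1" by linarith
  have "Q \<bullet> (cross3 P (Q + R)) = orient Q P R"
    by (simp add: cross_add_right inner_add_right orient_def dot_cross_self)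
  then have "Q \<bullet> (cross3 P (Q + R)) \<noteq> 0" using o orient_cyc(2) by (metis neg_equal_0_iff_equal)
  then have "cross3 P (Q + R) \<noteq> 0" by auto
  then have "(norm (cross3 P (Q + R)))^2 > 0" by simp
  moreover have "(norm (cross3 P (Q + R)))^2 + (P \<bullet> (Q + R))^2 = (norm (Q + R))^2"
    using norm_cross_dot[of P "Q + R"] P by simp
  moreover have "P \<bullet> (Q + R) = 2 * p" using PR p_def by (simp add: inner_add_right)
  moreover have "(norm (Q + R))^2 = 2 + 2 * q"
    using Q R q_def by (simp add: power2_norm_eq_inner inner_add_left inner_add_right inner_commute norm_eq_1)
  ultimately have "(2 * p)^2 < 2 + 2 * q"
  proof -
    assume h1: "(norm (cross3 P (Q + R)))^2 > 0"
      and h2: "(norm (cross3 P (Q + R)))^2 + (P \<bullet> (Q + R))^2 = (norm (Q + R))^2"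
      and h3: "P \<bullet> (Q + R) = 2 * p" and h4: "(norm (Q + R))^2 = 2 + 2 * q"
    from h2 h3 h4 have "(norm (cross3 P (Q + R)))^2 + (2 * p)^2 = 2 + 2 * q" by simp
    with h1 show ?thesis by linarith
  qed
  then have key: "2 * p^2 < 1 + q" by (simp add: power_mult_distrib)
  let ?tQ = "Q - (P \<bullet> Q) *\<^sub>R P" and ?tR = "R - (P \<bullet> R) *\<^sub>R P"
  have nQ: "(norm ?tQ)^2 = 1 - p^2" using tan_norm2[OF P Q] p_def by simp
  have nR: "(norm ?tR)^2 = 1 - p^2" using tan_norm2[OF P R] PR by simp
  have eqn: "norm ?tQ = norm ?tR" using nQ nR by (metis norm_ge_zero power2_eq_imp_eq)
  have dP: "norm ?tQ * norm ?tR = 1 - p^2" using nQ unfolding eqn[symmetric] by (simp add: power2_eq_square)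
  have xa: "cosang Q P R = (q - p^2) / (1 - p^2)"
    unfolding cosang_def dP using tan_inner[OF P, of Q R] PR p_def q_def by (simp add: power2_eq_square)
  let ?sP = "P - (Q \<bullet> P) *\<^sub>R Q" and ?sR = "R - (Q \<bullet> R) *\<^sub>R Q"
  have mP: "(norm ?sP)^2 = 1 - p^2" using tan_norm2[OF Q P] p_def by (simp add: inner_commute)
  have mR: "(norm ?sR)^2 = 1 - q^2" using tan_norm2[OF Q R] q_def by simp
  have d2: "(norm ?sP * norm ?sR)^2 = (1 - p^2) * (1 - q^2)" using mP mR by (simp add: power_mult_distrib)
  have xt: "cosang P Q R = (p - p * q) / (norm ?sP * norm ?sR)"
    unfolding cosang_def using tan_inner[OF Q, of P R] PR p_def q_def by (simp add: inner_commute)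
  have xt2: "(cosang P Q R)^2 = (p - p * q)^2 / ((1 - p^2) * (1 - q^2))"
    unfolding xt d2[symmetric] by (simp add: power_divide)
  have qq: "-1 < q" "q < 1" using q1 abs_square_less_1[of q] by (auto simp: abs_less_iff)
  have ineq: "(cosang P Q R)^2 < (1 - cosang Q P R) / 2"
  proof -
    have A: "(p - p * q)^2 / ((1 - p^2) * (1 - q^2)) = p^2 * (1 - q) / ((1 - p^2) * (1 + q))"
    proof -
      have e1: "(p - p * q)^2 = (p^2 * (1 - q)) * (1 - q)" by (simp add: power2_eq_square algebra_simps)
      have e2: "(1 - p^2) * (1 - q^2) = ((1 - p^2) * (1 + q)) * (1 - q)" by (simp add: power2_eq_square algebra_simps)
      have "1 - q \<noteq> 0" using qq by simp
      then show ?thesis unfolding e1 e2 by (rule mult_divide_mult_cancel_right)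
    qed
    have B: "(1 - (q - p^2) / (1 - p^2)) / 2 = (1 - q) / (2 * (1 - p^2))"
      using p1 by (simp add: field_simps)
    have "p^2 * (1 - q) / ((1 - p^2) * (1 + q)) < (1 - q) / (2 * (1 - p^2))"
    proof -
      have pos: "0 < 1 - p^2" "0 < 1 + q" "0 < 1 - q" using p1 qq by auto
      have "p^2 * (1 - q) * (2 * (1 - p^2)) < (1 - q) * ((1 - p^2) * (1 + q))"
      proof -
        have "(1 - q) * (2 * p^2 * (1 - p^2)) < (1 - q) * ((1 + q) * (1 - p^2))"
          using key pos by (intro mult_strict_left_mono) auto
        then show ?thesis by (simp add: algebra_simps)
      qed
      moreover have "0 < (1 - p^2) * (1 + q)" "0 < 2 * (1 - p^2)" using pos by auto
      ultimately show ?thesis by (intro frac_lt) (auto simp: algebra_simps)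
    qed
    then show ?thesis unfolding xt2 xa B[symmetric] A .
  qed
  show ?thesis unfolding sph_angle_cos
    by (rule arccos_sum[OF cosang_bound cosang_bound ineq])
qed


lemma t1: fixes L M N :: real assumes "\<bar>L - M\<bar>^2 < N^2" "N \<ge> 0" shows "\<bar>L - M\<bar> < N"
  using assms by (rule power_less_imp_less_base)
lemma t2: fixes L M N :: real assumes "N^2 < (L+M)^2" "L > 0" "M>0" shows "N < L + M"
  using assms(1) by (rule power_less_imp_less_base) (use assms in auto)
lemma t3: fixes L M N :: real assumes "\<bar>L - M\<bar> < N" "N < L + M" shows "\<bar>N - M\<bar> < L"
  using assms by (simp add: abs_less_iff)
lemma t4: fixes c N M :: real assumes "\<bar>c\<bar> < 1" shows "c * (N - M) \<le> \<bar>N - M\<bar>"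
  proof -
    have "c * (N - M) \<le> \<bar>c * (N - M)\<bar>" by simp
    also have "\<dots> = \<bar>c\<bar> * \<bar>N - M\<bar>" by (simp add: abs_mult)
    also have "\<dots> \<le> \<bar>N - M\<bar>" using assms(1) by (intro mult_left_le_one_le) auto
    finally show ?thesis .
  qed
lemma t5: fixes c N M L :: real assumes "\<bar>N - M\<bar> < L" "c * (N - M) \<le> \<bar>N - M\<bar>" shows "c * N < L + M * c"
proof -
  have "c * (N - M) = c * N - M * c" by (simp add: algebra_simps)
  then show ?thesis using assms by linarith
qed
lemma t6:
  fixes c L M N :: real
  assumes "\<bar>c\<bar> < 1" "L > 0" "M > 0" "N^2 = L^2 + M^2 + 2*L*M*c"
  shows "\<bar>L - M\<bar>^2 < N^2"
proof -
  have "N^2 - (L - M)^2 = 2*L*M*(1+c)" unfolding assms(4) by (simp add: power2_eq_square algebra_simps)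
  moreover have "2*L*M*(1+c) > 0" using assms(1-3) by (intro mult_pos_pos) (auto simp: abs_less_iff)
  ultimately show "\<bar>L - M\<bar>^2 < N^2" by (simp only: power2_abs)
qed
lemma t7:
  fixes c L M N :: real
  assumes "\<bar>c\<bar> < 1" "L > 0" "M > 0" "N^2 = L^2 + M^2 + 2*L*M*c"
  shows "N^2 < (L + M)^2"
proof -
  have "(L + M)^2 - N^2 = 2*L*M*(1-c)" unfolding assms(4) by (simp add: power2_eq_square algebra_simps)
  moreover have "2*L*M*(1-c) > 0" using assms(1-3) by (intro mult_pos_pos) (auto simp: abs_less_iff)
  ultimately show ?thesis by linarith
qed
lemma scal_ineq:
  fixes c L M N :: real
  assumes "\<bar>c\<bar> < 1" "L > 0" "M > 0" "N \<ge> 0" "N^2 = L^2 + M^2 + 2*L*M*c"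
  shows "c * N < L + M * c"
proof -
  have n1: "\<bar>L - M\<bar> < N" using t6[OF assms(1,2,3,5)] assms(4) by (rule t1)
  have n2: "N < L + M" using t7[OF assms(1,2,3,5)] assms(2,3) by (rule t2)
  show ?thesis using t3[OF n1 n2] t4[OF assms(1)] by (rule t5)
qed
lemma cone2d:
  fixes u v w :: "'a::real_inner"
  assumes u: "u \<noteq> 0" and v: "v \<noteq> 0" and cs: "\<bar>u \<bullet> v\<bar> < norm u * norm v"
    and w: "w = l *\<^sub>R u + m *\<^sub>R v" and l: "l > 0" and m: "m > 0"
  shows "(u \<bullet> v) / (norm u * norm v) < (u \<bullet> w) / (norm u * norm w)"
proof -
  define a where "a = norm u"
  define b where "b = norm v"
  have a: "a > 0" and b: "b > 0" using u v a_def b_def by auto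
  define c where "c = (u \<bullet> v) / (a * b)"
  have uv: "u \<bullet> v = a * b * c" using a b c_def by simp
  have c1: "\<bar>c\<bar> < 1" using cs a b unfolding c_def a_def[symmetric] b_def[symmetric]
    by (simp add: abs_div abs_mult divide_less_eq)
  define N where "N = norm w"
  have "N^2 = w \<bullet> w" by (simp add: N_def power2_norm_eq_inner)
  also have "\<dots> = l^2 * (u \<bullet> u) + m^2 * (v \<bullet> v) + 2 * l * m * (u \<bullet> v)"
    unfolding w by (simp add: inner_add_left inner_add_right inner_commute power2_eq_square algebra_simps)
  also have "\<dots> = (l*a)^2 + (m*b)^2 + 2*(l*a)*(m*b)*c"
    unfolding uv a_def b_def by (simp add: power2_norm_eq_inner[symmetric] power_mult_distrib)
  finally have N2: "N^2 = (l*a)^2 + (m*b)^2 + 2*(l*a)*(m*b)*c" .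
  have key: "c * N < l*a + (m*b) * c"
    by (rule scal_ineq[OF c1 _ _ _ N2]) (use a b l m N_def in auto)
  have uw: "u \<bullet> w = a * (l*a + (m*b)*c)"
    unfolding w using uv by (simp add: inner_add_right a_def power2_norm_eq_inner[symmetric] power2_eq_square algebra_simps)
  have Npos: "N > 0"
  proof -
    have "\<bar>l*a - m*b\<bar> \<ge> 0" by simp
    have "N^2 > 0"
    proof -
      have "N^2 - (l*a - m*b)^2 = 2*(l*a)*(m*b)*(1+c)" using N2 by (simp add: power2_eq_square algebra_simps)
      moreover have "2*(l*a)*(m*b)*(1+c) > 0" using a b l m c1 by (simp add: abs_less_iff)
      ultimately show ?thesis by (smt (verit) zero_le_power2)
    qed
    then show ?thesis using N_def by (simp add: zero_less_power2)
  qed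
  have "(u \<bullet> v) / (norm u * norm v) = c" unfolding c_def a_def b_def ..
  also have "c < (l*a + (m*b)*c) / N" using key Npos by (simp add: less_divide_eq mult.commute)
  also have "\<dots> = (u \<bullet> w) / (norm u * norm w)" unfolding uw N_def[symmetric] a_def[symmetric] using a by simp
  finally show ?thesis .
qed


lemma cramer: "orient a b c *\<^sub>R x = orient x b c *\<^sub>R a + orient a x c *\<^sub>R b + orient a b x *\<^sub>R c"
  unfolding orient_def by (simp add: cross3_simps forall_3) 
lemma orient_proj: "orient Q (X - t *\<^sub>R Q) (Y - s *\<^sub>R Q) = orient Q X Y"
  unfolding orient_def by (simp add: cross3_simps forall_3) 

lemma tangent_dec:
  assumes Q: "norm Q = 1"
  shows "orient Q P S *\<^sub>R (R - (Q \<bullet> R) *\<^sub>R Q)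
     = orient Q R S *\<^sub>R (P - (Q \<bullet> P) *\<^sub>R Q) + orient Q P R *\<^sub>R (S - (Q \<bullet> S) *\<^sub>R Q)"
proof -
  define u where "u = P - (Q \<bullet> P) *\<^sub>R Q"
  define v where "v = S - (Q \<bullet> S) *\<^sub>R Q"
  define w where "w = R - (Q \<bullet> R) *\<^sub>R Q"
  have QQ: "Q \<bullet> Q = 1" using Q by (simp add: norm_eq_1)
  have ou: "Q \<bullet> u = 0" "Q \<bullet> v = 0" "Q \<bullet> w = 0"
    unfolding u_def v_def w_def using QQ by (simp_all add: inner_diff_right)
  have "Q \<bullet> (orient w u v *\<^sub>R Q) = Q \<bullet> (orient Q u v *\<^sub>R w + orient w Q v *\<^sub>R u + orient w u Q *\<^sub>R v)"
    using cramer[of w u v Q] by simp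
  then have z: "orient w u v = 0" using ou QQ by (simp add: inner_add_right)
  have "orient Q u v *\<^sub>R w = orient w u v *\<^sub>R Q + orient Q w v *\<^sub>R u + orient Q u w *\<^sub>R v"
    by (rule cramer)
  then have "orient Q u v *\<^sub>R w = orient Q w v *\<^sub>R u + orient Q u w *\<^sub>R v" using z by simp
  then show ?thesis
    unfolding u_def v_def w_def orient_proj .
qed

lemma sph_angle_sym: "sph_angle Q P R = sph_angle R P Q"
  unfolding sph_angle_def Let_def by (simp add: inner_commute mult.commute)

lemma cross_ne: "orient Q u v \<noteq> 0 \<Longrightarrow> cross3 u v \<noteq> 0"
  unfolding orient_def by auto

lemma conv:
  assumes P: "norm P = 1" and Q: "norm Q = 1" and R: "norm R = 1" and S: "norm S = 1"
    and pq: "P \<bullet> Q = P \<bullet> R" and o1: "orient P Q R \<noteq> 0" and o2: "orient Q P S \<noteq> 0"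
    and l: "orient Q R S / orient Q P S > 0" and m: "orient Q P R / orient Q P S > 0"
  shows "sph_angle Q P R + 2 * sph_angle P Q S > pi"
proof -
  define u where "u = P - (Q \<bullet> P) *\<^sub>R Q"
  define v where "v = S - (Q \<bullet> S) *\<^sub>R Q"
  define w where "w = R - (Q \<bullet> R) *\<^sub>R Q"
  have ouv: "orient Q u v \<noteq> 0" unfolding u_def v_def orient_proj using o2 .
  have cr: "cross3 u v \<noteq> 0" using cross_ne[OF ouv] .
  have u0: "u \<noteq> 0" using cr by auto
  have v0: "v \<noteq> 0" using cr by auto
  have "(norm (cross3 u v))^2 + (u \<bullet> v)^2 = (norm u * norm v)^2" by (rule norm_cross_dot)
  moreover have "(norm (cross3 u v))^2 > 0" using cr by simp
  ultimately have "(u \<bullet> v)^2 < (norm u * norm v)^2" by linarith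
  then have cs: "\<bar>u \<bullet> v\<bar> < norm u * norm v"
    by (metis abs_ge_zero abs_of_nonneg norm_ge_zero power2_abs power_less_imp_less_base zero_le_mult_iff)
  have wd: "w = (orient Q R S / orient Q P S) *\<^sub>R u + (orient Q P R / orient Q P S) *\<^sub>R v"
  proof -
    have "orient Q P S *\<^sub>R w = orient Q R S *\<^sub>R u + orient Q P R *\<^sub>R v"
      unfolding u_def v_def w_def by (rule tangent_dec[OF Q])
    then have "(1 / orient Q P S) *\<^sub>R (orient Q P S *\<^sub>R w) = (1 / orient Q P S) *\<^sub>R (orient Q R S *\<^sub>R u + orient Q P R *\<^sub>R v)"
      by simp
    then show ?thesis using o2 by (simp add: scaleR_add_right)
  qed
  have lt: "(u \<bullet> v) / (norm u * norm v) < (u \<bullet> w) / (norm u * norm w)"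
    by (rule cone2d[OF u0 v0 cs wd l m])
  have cb: "cosang P Q S = (u \<bullet> v) / (norm u * norm v)" "cosang P Q R = (u \<bullet> w) / (norm u * norm w)"
    unfolding cosang_def u_def v_def w_def by simp_all
  have "arccos (cosang P Q R) < arccos (cosang P Q S)"
  proof (rule arccos_less_arccos)
    show "- 1 \<le> cosang P Q S" using cosang_bound[of P Q S] by (simp add: abs_le_iff)
    show "cosang P Q R \<le> 1" using cosang_bound[of P Q R] by (simp add: abs_le_iff)
    show "cosang P Q S < cosang P Q R" unfolding cb by (rule lt)
  qed
  then have "sph_angle P Q R < sph_angle P Q S" by (simp add: sph_angle_cos)
  moreover have "sph_angle Q P R + 2 * sph_angle P Q R > pi" by (rule tri[OF P Q R pq o1])
  ultimately show ?thesis by linarith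
qed


lemma sgn_prod: "(s::real) = 1 \<or> s = -1 \<Longrightarrow> s * x > 0 \<Longrightarrow> s * y > 0 \<Longrightarrow> x / y > 0"
  by (auto simp: zero_less_divide_iff)

lemma dot_eq:
  assumes "norm (x::real^3) = 1" "norm y = 1" "norm z = 1" "norm t = 1"
    and "arccos (x \<bullet> y) = arccos (z \<bullet> t)"
  shows "x \<bullet> y = z \<bullet> t"
proof -
  have "\<bar>x \<bullet> y\<bar> \<le> 1" "\<bar>z \<bullet> t\<bar> \<le> 1" using Cauchy_Schwarz_ineq2[of x y] Cauchy_Schwarz_ineq2[of z t] assms by auto
  then show ?thesis using assms(5) by (metis cos_arccos_abs)
qed

theorem lemma5:
  fixes V0 V1 V2 V3 :: "real^3" and a b c :: real
  assumes "convex_sph_quad V0 V1 V2 V3"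
    and "sph_dist V0 V1 = a" and "sph_dist V3 V0 = a"
    and "sph_dist V1 V2 = b" and "sph_dist V2 V3 = c"
    and "a \<noteq> b" and "a \<noteq> c" and "b \<noteq> c"
  shows "sph_angle V3 V0 V1 + 2 * sph_angle V0 V1 V2 > pi
       \<and> sph_angle V3 V0 V1 + 2 * sph_angle V2 V3 V0 > pi"
proof -
  have n: "norm V0 = 1" "norm V1 = 1" "norm V2 = 1" "norm V3 = 1"
    using assms(1) unfolding convex_sph_quad_def on_sphere_def by auto
  obtain s :: real where s: "s = 1 \<or> s = -1"
    and s1: "s * orient V0 V1 V2 > 0" and s2: "s * orient V0 V1 V3 > 0"
    and s3: "s * orient V1 V2 V3 > 0" and s4: "s * orient V1 V2 V0 > 0"
    and s5: "s * orient V2 V3 V0 > 0" and s6: "s * orient V2 V3 V1 > 0"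
    and s7: "s * orient V3 V0 V1 > 0" and s8: "s * orient V3 V0 V2 > 0"
    using assms(1) unfolding convex_sph_quad_def by blast
  have d: "V0 \<bullet> V1 = V3 \<bullet> V0" using dot_eq[OF n(1,2) n(4,1)] assms(2,3) by (simp add: sph_dist_def)
  have pq: "V0 \<bullet> V1 = V0 \<bullet> V3" using d by (simp add: inner_commute)
  have ne: "\<And>x. s * x > 0 \<Longrightarrow> x \<noteq> 0" by auto
  have A: "sph_angle V1 V0 V3 + 2 * sph_angle V0 V1 V2 > pi"
  proof (rule conv[OF n(1,2,4,3) pq])
    show "orient V0 V1 V3 \<noteq> 0" using ne[OF s2] .
    have "orient V1 V0 V2 = - orient V0 V1 V2" unfolding orient_def by (simp add: cross3_simps)
    then show "orient V1 V0 V2 \<noteq> 0" using ne[OF s1] by simp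
    have "orient V1 V3 V2 = - orient V1 V2 V3" "orient V1 V0 V2 = - orient V1 V2 V0"
      unfolding orient_def by (simp_all add: cross3_simps)
    then show "orient V1 V3 V2 / orient V1 V0 V2 > 0" using sgn_prod[OF s s3 s4] by simp
    have "orient V1 V0 V3 = - orient V0 V1 V3" "orient V1 V0 V2 = - orient V0 V1 V2"
      unfolding orient_def by (simp_all add: cross3_simps)
    then show "orient V1 V0 V3 / orient V1 V0 V2 > 0" using sgn_prod[OF s s2 s1] by simp
  qed
  have B: "sph_angle V3 V0 V1 + 2 * sph_angle V0 V3 V2 > pi"
  proof (rule conv[OF n(1,4,2,3)])
    show "V0 \<bullet> V3 = V0 \<bullet> V1" using pq by simp
    have "orient V0 V3 V1 = - orient V3 V0 V1" unfolding orient_def by (simp add: cross3_simps)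
    then show "orient V0 V3 V1 \<noteq> 0" using ne[OF s7] by simp
    show "orient V3 V0 V2 \<noteq> 0" using ne[OF s8] .
    have "orient V3 V1 V2 = orient V1 V2 V3"
      unfolding orient_def by (simp_all add: cross3_simps)
    then show "orient V3 V1 V2 / orient V3 V0 V2 > 0" using sgn_prod[OF s s3 s8] by simp
    show "orient V3 V0 V1 / orient V3 V0 V2 > 0" using sgn_prod[OF s s7 s8] by simp
  qed
  show ?thesis using A B sph_angle_sym[of V1 V0 V3] sph_angle_sym[of V0 V3 V2] by simp
qed

end
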